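(* Let $r\ge2$ and let $\mathcal{P}$ be a set of $r$-patterns. Suppose there are constants $C>0$ and $0\le x<r$ such that $a_{\mathcal P}(k)\le C^{k}k^{kx}$ for all $k\ge2$. Then there is a constant $C''>0$ such that a.a.s. $z_{\mathcal{P}}(\mathbb{RM}^{(r)}_{n})\le C'' n^{1/(r-x)}$.
   Context: An ordered $r$-matching of size $k$ is a set of $k$ pairwise disjoint $r$-element subsets (edges) of a linearly ordered vertex set of size $rk$; $\mathcal{M}^{(r)}_k$ is the set of all ordered $r$-matchings on $[rk]$ and $\mathbb{RM}^{(r)}_n$ is a uniformly random element of $\mathcal{M}^{(r)}_n$. An $r$-pattern is an ordered $r$-matching of size 2 (written as a word over $\{A,B\}$, each letter $r$ times). Two edges form pattern $P$ if they induce a matching order-isomorphic to $P$. For a set $\mathcal P$ of $r$-patterns, a $\mathcal P$-clique is an ordered matching all of whose pairs of edges form patterns in $\mathcal P$; $z_{\mathcal P}(M)$ is the largest size of a $\mathcal P$-clique contained in $M$; $a_{\mathcal P}(k)$ is the number of $\mathcal P$-cliques in $\mathcal{M}^{(r)}_k$. "A.a.s." means with probability tending to 1 as $n\to\infty$. *)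

theory Defs
  imports Complex_Main
begin

definition ord_matchings :: "nat \<Rightarrow> nat \<Rightarrow> nat set set set" where
  "ord_matchings r k = {M. (\<forall>e\<in>M. card e = r) \<and> (\<forall>e\<in>M. \<forall>f\<in>M. e \<noteq> f \<longrightarrow> e \<inter> f = {}) \<and> \<Union>M = {0..<r*k} \<and> card M = k}"

definition r_patterns :: "nat \<Rightarrow> nat set set set" where
  "r_patterns r = ord_matchings r 2"

text \<open>The pattern formed by two edges e, f: the matching {e,f} transported to
  {0..<|e \<union> f|} by the unique order-preserving bijection i \<mapsto> #{j \<in> e \<union> f. j < i}.\<close>
definition pattern_of :: "nat set \<Rightarrow> nat set \<Rightarrow> nat set set" where
  "pattern_of e f = (\<lambda>S. (\<lambda>i. card {j \<in> e \<union> f. j < i}) ` S) ` {e, f}"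

definition is_clique :: "nat set set set \<Rightarrow> nat set set \<Rightarrow> bool" where
  "is_clique P N \<longleftrightarrow> (\<forall>e\<in>N. \<forall>f\<in>N. e \<noteq> f \<longrightarrow> pattern_of e f \<in> P)"

definition z_clique :: "nat set set set \<Rightarrow> nat set set \<Rightarrow> nat" where
  "z_clique P M = Max (card ` {N. N \<subseteq> M \<and> is_clique P N})"

definition a_clique :: "nat \<Rightarrow> nat set set set \<Rightarrow> nat \<Rightarrow> nat" where
  "a_clique r P k = card {M \<in> ord_matchings r k. is_clique P M}"

definition prob_RM :: "nat \<Rightarrow> nat \<Rightarrow> (nat set set \<Rightarrow> bool) \<Rightarrow> real" where
  "prob_RM r n Q = real (card {M \<in> ord_matchings r n. Q M}) / real (card (ord_matchings r n))"

end

theory Submission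
  imports Defs
begin


definition mat :: "nat \<Rightarrow> nat set \<Rightarrow> nat set set set" where
  "mat r A = {M. (\<forall>e\<in>M. card e = r) \<and> (\<forall>e\<in>M. \<forall>f\<in>M. e \<noteq> f \<longrightarrow> e \<inter> f = {}) \<and> \<Union>M = A}"

lemma mat_sub: "M \<in> mat r A \<Longrightarrow> e \<in> M \<Longrightarrow> e \<subseteq> A"
  unfolding mat_def by blast

lemma mat_Pow: "M \<in> mat r A \<Longrightarrow> M \<subseteq> Pow A"
  using mat_sub by blast

lemma mat_finite: "finite A \<Longrightarrow> finite (mat r A)"
  by (rule finite_subset[of _ "Pow (Pow A)"]) (auto simp: mat_def)

lemma mat_card:
  assumes "r > 0" "finite A" "M \<in> mat r A"
  shows "finite M \<and> card A = r * card M"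
proof -
  have fM: "finite M" by (rule finite_subset[of _ "Pow A"]) (use assms in \<open>auto simp: mat_def\<close>)
  have fe: "finite e" if "e \<in> M" for e
    by (rule finite_subset[of _ A]) (use assms that in \<open>auto simp: mat_def\<close>)
  have "pairwise disjnt M" using assms(3) unfolding mat_def pairwise_def disjnt_def by blast
  then have "card (\<Union>M) = sum card M"
    using fe by (intro card_Union_disjoint) auto
  also have "\<dots> = r * card M" using assms by (simp add: mat_def)
  finally show ?thesis using fM assms by (simp add: mat_def)
qed

lemma ord_eq: "r > 0 \<Longrightarrow> ord_matchings r k = mat r {0..<r*k}"
  unfolding ord_matchings_def
  using mat_card[of r "{0..<r*k}"] by (auto simp: mat_def)

lemma mat_image:
  assumes "inj_on h A" "M \<in> mat r A"
  shows "image h ` M \<in> mat r (h ` A)"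
proof -
  have sub: "e \<subseteq> A" if "e \<in> M" for e using assms that by (auto simp: mat_def)
  show ?thesis unfolding mat_def
  proof (intro CollectI conjI ballI impI)
    fix e' assume "e' \<in> image h ` M"
    then obtain e where "e \<in> M" "e' = h ` e" by auto
    have "inj_on h e" using inj_on_subset[OF assms(1) sub[OF \<open>e \<in> M\<close>]] .
    then have "card e' = card e" using \<open>e' = h ` e\<close> card_image by blast
    then show "card e' = r" using assms(2) \<open>e \<in> M\<close> by (simp add: mat_def)
  next
    fix e' f' assume "e' \<in> image h ` M" "f' \<in> image h ` M" "e' \<noteq> f'"
    then obtain e f where "e \<in> M" "e' = h ` e" "f \<in> M" "f' = h ` f" "e \<noteq> f" by auto
    then have "e \<inter> f = {}" using assms by (auto simp: mat_def)
    moreover have "h ` (e \<inter> f) = h ` e \<inter> h ` f"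
      using inj_on_image_Int[OF assms(1) sub[OF \<open>e \<in> M\<close>] sub[OF \<open>f \<in> M\<close>]] .
    ultimately show "e' \<inter> f' = {}" using \<open>e' = h ` e\<close> \<open>f' = h ` f\<close> by simp
  next
    show "\<Union> (image h ` M) = h ` A" using assms by (auto simp: mat_def)
  qed
qed

lemma transport:
  assumes "bij_betw h A B" "\<And>M. M \<in> mat r A \<Longrightarrow> Q' (image h ` M) = Q M"
  shows "card {M \<in> mat r B. Q' M} = card {M \<in> mat r A. Q M}"
proof -
  have inj: "inj_on h A" and img: "h ` A = B" using assms(1) by (auto simp: bij_betw_def)
  have inj2: "inj_on (image h) (Pow A)" using inj by (rule inj_on_image_Pow)
  have inj3: "inj_on (image (image h)) {M \<in> mat r A. Q M}"
  proof (rule inj_onI)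
    fix M1 M2 assume a: "M1 \<in> {M \<in> mat r A. Q M}" "M2 \<in> {M \<in> mat r A. Q M}" "image h ` M1 = image h ` M2"
    have s12: "M1 \<subseteq> Pow A" "M2 \<subseteq> Pow A" using mat_Pow[of M1 r A] mat_Pow[of M2 r A] a(1,2) by simp_all
    then show "M1 = M2" using a(3) inj_on_image_eq_iff[OF inj2 s12] by simp
  qed
  have eq: "image (image h) ` {M \<in> mat r A. Q M} = {M \<in> mat r B. Q' M}"
  proof
    show "image (image h) ` {M \<in> mat r A. Q M} \<subseteq> {M \<in> mat r B. Q' M}"
    proof
      fix M' assume "M' \<in> image (image h) ` {M \<in> mat r A. Q M}"
      then obtain M where M: "M \<in> mat r A" "Q M" "M' = image h ` M" by blast
      have "M' \<in> mat r B" using mat_image[OF inj M(1)] img M(3) by simp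
      moreover have "Q' M'" using assms(2)[OF M(1)] M by simp
      ultimately show "M' \<in> {M \<in> mat r B. Q' M}" by blast
    qed
  next
    show "{M \<in> mat r B. Q' M} \<subseteq> image (image h) ` {M \<in> mat r A. Q M}"
    proof
      fix M' assume M': "M' \<in> {M \<in> mat r B. Q' M}"
      define g where "g = inv_into A h"
      have bg: "bij_betw g B A" unfolding g_def by (rule bij_betw_inv_into[OF assms(1)])
      have ig: "inj_on g B" and gB: "g ` B = A" using bg by (auto simp: bij_betw_def)
      define M where "M = image g ` M'"
      have MA: "M \<in> mat r A" unfolding M_def using mat_image[OF ig, of M' r] M' gB by simp
      have hg: "h (g y) = y" if "y \<in> B" for y using that img inj unfolding g_def
        by (simp add: f_inv_into_f)
      have hge: "h ` g ` e = e" if "e \<in> M'" for e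
      proof -
        have "e \<subseteq> B" using that M' mat_sub[of M' r B e] by simp
        have "h ` g ` e = (\<lambda>y. h (g y)) ` e" by (rule image_image)
        also have "\<dots> = (\<lambda>y. y) ` e" using \<open>e \<subseteq> B\<close> hg by (intro image_cong) auto
        finally show ?thesis by simp
      qed
      have "image h ` M = (\<lambda>e. h ` g ` e) ` M'"
        unfolding M_def by (rule image_image)
      also have "\<dots> = (\<lambda>e. e) ` M'"
        by (rule image_cong) (simp_all only: hge)
      finally have "image h ` M = M'" by simp
      have "Q M" using assms(2)[OF MA] \<open>image h ` M = M'\<close> M' by simp
      show "M' \<in> image (image h) ` {M \<in> mat r A. Q M}"
        by (rule image_eqI[where x=M]) (use \<open>image h ` M = M'\<close> MA \<open>Q M\<close> in simp_all)
    qed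
  qed
  have "card (image (image h) ` {M \<in> mat r A. Q M}) = card {M \<in> mat r A. Q M}"
    by (rule card_image[OF inj3])
  then show ?thesis by (simp only: eq)
qed



lemma sorted_bij:
  assumes "finite S"
  shows "bij_betw ((!) (sorted_list_of_set S)) {0..<card S} S"
    and "strict_mono_on {0..<card S} ((!) (sorted_list_of_set S))"
proof -
  let ?xs = "sorted_list_of_set S"
  show "bij_betw ((!) ?xs) {0..<card S} S"
    by (rule bij_betw_nth) (use assms in \<open>simp_all add: lessThan_atLeast0\<close>)
  have "sorted_wrt (<) ?xs" using assms by simp
  then show "strict_mono_on {0..<card S} ((!) ?xs)"
    unfolding strict_mono_on_def using assms sorted_wrt_nth_less[of "(<)" ?xs] by simp
qed

lemma pattern_mono:
  assumes sm: "strict_mono_on A h" and "e \<subseteq> A" "f \<subseteq> A"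
  shows "pattern_of (h ` e) (h ` f) = pattern_of e f"
proof -
  have inj: "inj_on h A" using sm by (rule strict_mono_on_imp_inj_on)
  have ef: "e \<union> f \<subseteq> A" using assms by simp
  have key: "card {j \<in> h ` e \<union> h ` f. j < h i} = card {j \<in> e \<union> f. j < i}" if i: "i \<in> e \<union> f" for i
  proof -
    have eq: "{j \<in> h ` e \<union> h ` f. j < h i} = h ` {j \<in> e \<union> f. j < i}"
    proof (intro equalityI subsetI)
      fix y assume "y \<in> {j \<in> h ` e \<union> h ` f. j < h i}"
      then obtain j where j: "j \<in> e \<union> f" "y = h j" "h j < h i" by blast
      then have "j < i" using strict_mono_on_less[OF sm, of j i] ef i by blast
      then show "y \<in> h ` {j \<in> e \<union> f. j < i}" using j by blast
    next
      fix y assume "y \<in> h ` {j \<in> e \<union> f. j < i}"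
      then obtain j where j: "j \<in> e \<union> f" "y = h j" "j < i" by blast
      then have "h j < h i" using strict_mono_on_less[OF sm, of j i] ef i by blast
      then show "y \<in> {j \<in> h ` e \<union> h ` f. j < h i}" using j by blast
    qed
    have "{j \<in> e \<union> f. j < i} \<subseteq> A" using ef by auto
    then have "inj_on h {j \<in> e \<union> f. j < i}" by (rule inj_on_subset[OF inj])
    then show ?thesis unfolding eq by (rule card_image)
  qed
  have ie: "(\<lambda>i. card {j \<in> h ` e \<union> h ` f. j < i}) ` h ` g = (\<lambda>i. card {j \<in> e \<union> f. j < i}) ` g"
    if "g \<subseteq> e \<union> f" for g
  proof -
    have "(\<lambda>i. card {j \<in> h ` e \<union> h ` f. j < i}) ` h ` g = (\<lambda>i. card {j \<in> h ` e \<union> h ` f. j < h i}) ` g"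
      by (simp add: image_image)
    also have "\<dots> = (\<lambda>i. card {j \<in> e \<union> f. j < i}) ` g"
      using key that by (intro image_cong) auto
    finally show ?thesis .
  qed
  show ?thesis unfolding pattern_of_def
    using ie[of e] ie[of f] by simp
qed

lemma clique_mono:
  assumes sm: "strict_mono_on A h" and N: "N \<in> mat r A"
  shows "is_clique P (image h ` N) = is_clique P N"
proof -
  have inj: "inj_on h A" using sm by (rule strict_mono_on_imp_inj_on)
  have sub: "e \<subseteq> A" if "e \<in> N" for e using mat_sub[OF N that] .
  have eqv: "(h ` e = h ` f) = (e = f)" if "e \<in> N" "f \<in> N" for e f
    using inj_on_image_eq_iff[OF inj sub[OF that(1)] sub[OF that(2)]] .
  have "is_clique P (image h ` N) = (\<forall>e\<in>N. \<forall>f\<in>N. h ` e \<noteq> h ` f \<longrightarrow> pattern_of (h ` e) (h ` f) \<in> P)"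
    unfolding is_clique_def by simp
  also have "\<dots> = (\<forall>e\<in>N. \<forall>f\<in>N. e \<noteq> f \<longrightarrow> pattern_of e f \<in> P)"
    using eqv pattern_mono[OF sm sub sub] by simp
  finally show ?thesis unfolding is_clique_def .
qed



lemma mat_cardE: "M \<in> mat r A \<Longrightarrow> e \<in> M \<Longrightarrow> card e = r"
  by (simp add: mat_def)

lemma mat_disjE: "M \<in> mat r A \<Longrightarrow> e \<in> M \<Longrightarrow> f \<in> M \<Longrightarrow> e \<noteq> f \<Longrightarrow> e \<inter> f = {}"
  by (simp add: mat_def)

lemma mat_UnionE: "M \<in> mat r A \<Longrightarrow> \<Union>M = A"
  by (simp add: mat_def)

lemma mat_union:
  assumes "N \<in> mat r S" "R \<in> mat r T" "S \<inter> T = {}"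
  shows "N \<union> R \<in> mat r (S \<union> T)"
  unfolding mat_def
proof (intro CollectI conjI ballI impI)
  fix e assume "e \<in> N \<union> R" then show "card e = r" using mat_cardE[OF assms(1)] mat_cardE[OF assms(2)] by blast
next
  fix e f assume ef: "e \<in> N \<union> R" "f \<in> N \<union> R" "e \<noteq> f"
  show "e \<inter> f = {}"
  proof (cases "e \<in> N")
    case eN: True
    show ?thesis
    proof (cases "f \<in> N")
      case True then show ?thesis using eN ef(3) mat_disjE[OF assms(1)] by blast
    next
      case False then have "f \<in> R" using ef(2) by simp
      then have "f \<subseteq> T" using mat_sub[OF assms(2)] by simp
      moreover have "e \<subseteq> S" using mat_sub[OF assms(1) eN] .
      ultimately show ?thesis using assms(3) by auto
    qed
  next
    case eN: False
    then have eR: "e \<in> R" using ef(1) by simp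
    show ?thesis
    proof (cases "f \<in> N")
      case True
      then have "f \<subseteq> S" using mat_sub[OF assms(1)] by simp
      moreover have "e \<subseteq> T" using mat_sub[OF assms(2) eR] .
      ultimately show ?thesis using assms(3) by auto
    next
      case False then have "f \<in> R" using ef(2) by simp
      then show ?thesis using eR ef(3) mat_disjE[OF assms(2)] by blast
    qed
  qed
next
  have "\<Union>N = S" "\<Union>R = T" using assms(1,2) unfolding mat_def by simp_all
  then show "\<Union>(N \<union> R) = S \<union> T" by simp
qed

lemma mat_subset:
  assumes "M \<in> mat r U" "N \<subseteq> M"
  shows "N \<in> mat r (\<Union>N)"
  unfolding mat_def using mat_cardE[OF assms(1)] mat_disjE[OF assms(1)] assms(2) by blast

lemma mat_diff:
  assumes M: "M \<in> mat r U" and NM: "N \<subseteq> M"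
  shows "M - N \<in> mat r (U - \<Union>N)"
  unfolding mat_def
proof (intro CollectI conjI ballI impI)
  fix e assume "e \<in> M - N" then show "card e = r" using mat_cardE[OF M] by blast
next
  fix e f assume "e \<in> M - N" "f \<in> M - N" "e \<noteq> f"
  then show "e \<inter> f = {}" using mat_disjE[OF M] by blast
next
  show "\<Union>(M - N) = U - \<Union>N"
  proof (intro equalityI subsetI)
    fix u assume "u \<in> \<Union>(M - N)"
    then obtain e where e: "e \<in> M" "e \<notin> N" "u \<in> e" by blast
    have "u \<in> U" using mat_sub[OF M e(1)] e(3) by blast
    moreover have "u \<notin> \<Union>N"
    proof
      assume "u \<in> \<Union>N"
      then obtain f where f: "f \<in> N" "u \<in> f" by blast
      have "e \<noteq> f" using e(2) f(1) by blast
      then have "e \<inter> f = {}" using mat_disjE[OF M e(1)] f(1) NM by blast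
      then show False using e(3) f(2) by blast
    qed
    ultimately show "u \<in> U - \<Union>N" by simp
  next
    fix u assume u: "u \<in> U - \<Union>N"
    then have "u \<in> \<Union>M" using mat_UnionE[OF M] by simp
    then obtain e where e: "e \<in> M" "u \<in> e" by blast
    have "e \<notin> N" using e u by blast
    then show "u \<in> \<Union>(M - N)" using e by blast
  qed
qed

lemma mat_disj:
  assumes "r > 0" "N \<in> mat r S" "R \<in> mat r T" "S \<inter> T = {}"
  shows "N \<inter> R = {}"
proof (rule ccontr)
  assume "N \<inter> R \<noteq> {}"
  then obtain e where e: "e \<in> N" "e \<in> R" by blast
  have "e \<subseteq> S" "e \<subseteq> T" using mat_sub[OF assms(2) e(1)] mat_sub[OF assms(3) e(2)] by simp_all
  then have "e = {}" using assms(4) by blast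
  moreover have "card e = r" using mat_cardE[OF assms(2) e(1)] .
  ultimately show False using assms(1) by simp
qed

lemma pairs_decomp:
  assumes r: "r > 0" and U: "finite U"
  shows "card {(M, N). M \<in> mat r U \<and> N \<subseteq> M \<and> card N = k \<and> Q N}
    = (\<Sum>S\<in>{S. S \<subseteq> U \<and> card S = r * k}. card {N \<in> mat r S. Q N} * card (mat r (U - S)))"
proof -
  define Ss where "Ss = {S. S \<subseteq> U \<and> card S = r * k}"
  define F where "F S = (\<lambda>(N, R). (N \<union> R, N)) ` ({N \<in> mat r S. Q N} \<times> mat r (U - S))" for S
  have finSs: "finite Ss" unfolding Ss_def using U by simp
  have finF: "finite (F S)" if "S \<in> Ss" for S
  proof -
    have "finite S" using that U unfolding Ss_def by (auto intro: finite_subset)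
    then have "finite ({N \<in> mat r S. Q N} \<times> mat r (U - S))"
      using mat_finite U by simp
    then show ?thesis unfolding F_def by simp
  qed
  have cardF: "card (F S) = card {N \<in> mat r S. Q N} * card (mat r (U - S))" if "S \<in> Ss" for S
  proof -
    have "inj_on (\<lambda>(N, R). (N \<union> R, N)) ({N \<in> mat r S. Q N} \<times> mat r (U - S))"
    proof (rule inj_onI)
      fix p q assume p: "p \<in> {N \<in> mat r S. Q N} \<times> mat r (U - S)"
        and q: "q \<in> {N \<in> mat r S. Q N} \<times> mat r (U - S)"
        and pq: "(\<lambda>(N, R). (N \<union> R, N)) p = (\<lambda>(N, R). (N \<union> R, N)) q"
      obtain N1 R1 where p': "p = (N1, R1)" by (cases p)
      obtain N2 R2 where q': "q = (N2, R2)" by (cases q)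
      have N1: "N1 \<in> mat r S" "R1 \<in> mat r (U - S)" using p p' by auto
      have N2: "N2 \<in> mat r S" "R2 \<in> mat r (U - S)" using q q' by auto
      have d1: "N1 \<inter> R1 = {}" by (rule mat_disj[OF r N1]) blast
      have d2: "N2 \<inter> R2 = {}" by (rule mat_disj[OF r N2]) blast
      have e: "N1 \<union> R1 = N2 \<union> R2" "N1 = N2" using pq p' q' by auto
      have "R1 = (N1 \<union> R1) - N1" using d1 by blast
      also have "\<dots> = (N2 \<union> R2) - N2" using e by simp
      also have "\<dots> = R2" using d2 by blast
      finally show "p = q" using p' q' e by simp
    qed
    then show ?thesis unfolding F_def by (simp add: card_image card_cartesian_product)
  qed
  have disj: "F S \<inter> F T = {}" if "S \<in> Ss" "T \<in> Ss" "S \<noteq> T" for S T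
  proof (rule ccontr)
    assume "F S \<inter> F T \<noteq> {}"
    then obtain M N where "(M, N) \<in> F S" "(M, N) \<in> F T" by auto
    then have "N \<in> mat r S" "N \<in> mat r T" unfolding F_def by auto
    then have "S = T" using mat_UnionE by metis
    then show False using that by simp
  qed
  have eq: "{(M, N). M \<in> mat r U \<and> N \<subseteq> M \<and> card N = k \<and> Q N} = (\<Union>S\<in>Ss. F S)"
  proof (intro equalityI subsetI)
    fix p assume "p \<in> {(M, N). M \<in> mat r U \<and> N \<subseteq> M \<and> card N = k \<and> Q N}"
    then obtain M N where p: "p = (M, N)" and M: "M \<in> mat r U" and NM: "N \<subseteq> M"
      and cN: "card N = k" and QN: "Q N" by blast
    define S where "S = \<Union>N"
    have NS: "N \<in> mat r S" unfolding S_def by (rule mat_subset[OF M NM])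
    have SU: "S \<subseteq> U" unfolding S_def using NM mat_sub[OF M] by blast
    then have "finite S" using U by (rule finite_subset)
    then have "card S = r * k" using mat_card[OF r _ NS] cN by simp
    then have SSs: "S \<in> Ss" unfolding Ss_def using SU by simp
    have R: "M - N \<in> mat r (U - S)" unfolding S_def by (rule mat_diff[OF M NM])
    have "M = N \<union> (M - N)" using NM by blast
    then have "p = (\<lambda>(N, R). (N \<union> R, N)) (N, M - N)" using p by simp
    moreover have "(N, M - N) \<in> {N \<in> mat r S. Q N} \<times> mat r (U - S)" using NS QN R by simp
    ultimately have "p \<in> F S" unfolding F_def by (rule image_eqI)
    then show "p \<in> (\<Union>S\<in>Ss. F S)" using SSs by blast
  next
    fix p assume "p \<in> (\<Union>S\<in>Ss. F S)"
    then obtain S where SSs: "S \<in> Ss" and "p \<in> F S" by blast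
    then obtain N R where p: "p = (N \<union> R, N)" and N: "N \<in> mat r S" "Q N" and R: "R \<in> mat r (U - S)"
      unfolding F_def by auto
    have SU: "S \<subseteq> U" and cS: "card S = r * k" using SSs unfolding Ss_def by simp_all
    have "N \<union> R \<in> mat r (S \<union> (U - S))" by (rule mat_union[OF N(1) R]) blast
    moreover have "S \<union> (U - S) = U" using SU by blast
    ultimately have NR: "N \<union> R \<in> mat r U" by simp
    have "finite S" using U SU by (auto intro: finite_subset)
    then have "card S = r * card N" using mat_card[OF r _ N(1)] by simp
    then have "card N = k" using cS r by simp
    then show "p \<in> {(M, N). M \<in> mat r U \<and> N \<subseteq> M \<and> card N = k \<and> Q N}"
      using p NR N(2) by simp
  qed
  have "card (\<Union>S\<in>Ss. F S) = (\<Sum>S\<in>Ss. card (F S))"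
    using finSs finF disj by (intro card_UN_disjoint) auto
  also have "\<dots> = (\<Sum>S\<in>Ss. card {N \<in> mat r S. Q N} * card (mat r (U - S)))"
    using cardF by (rule sum.cong[OF refl])
  finally show ?thesis unfolding eq Ss_def .
qed



definition Mc :: "nat \<Rightarrow> nat \<Rightarrow> nat" where "Mc r n = card (mat r {0..<r*n})"

lemma mat_card_inv:
  assumes "finite S" "card S = m"
  shows "card (mat r S) = card (mat r {0..<m})"
proof -
  obtain h where h: "bij_betw h {0..<m} S"
    using finite_same_card_bij[of "{0..<m}" S] assms by auto
  have "card {M \<in> mat r S. True} = card {M \<in> mat r {0..<m}. True}"
    by (rule transport[OF h]) simp
  then show ?thesis by simp
qed

lemma clique_count:
  assumes r: "r > 0" and S: "finite S" "card S = r * k"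
  shows "card {N \<in> mat r S. is_clique P N} = a_clique r P k"
proof -
  let ?h = "(!) (sorted_list_of_set S)"
  have b: "bij_betw ?h {0..<r*k} S" using sorted_bij(1)[OF S(1)] S(2) by simp
  have sm: "strict_mono_on {0..<r*k} ?h" using sorted_bij(2)[OF S(1)] S(2) by simp
  have "card {N \<in> mat r S. is_clique P N} = card {N \<in> mat r {0..<r*k}. is_clique P N}"
    by (rule transport[OF b]) (rule clique_mono[OF sm])
  also have "\<dots> = a_clique r P k" unfolding a_clique_def ord_eq[OF r] ..
  finally show ?thesis .
qed

lemma pairs_true:
  assumes r: "r > 0"
  shows "card {(M, N). M \<in> mat r {0..<r*n} \<and> N \<subseteq> M \<and> card N = k \<and> True} = Mc r n * (n choose k)"
proof -
  let ?U = "{0..<r*n}"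
  have eq: "{(M, N). M \<in> mat r ?U \<and> N \<subseteq> M \<and> card N = k \<and> True} = Sigma (mat r ?U) (\<lambda>M. {N. N \<subseteq> M \<and> card N = k})"
    by auto
  have fin: "finite (mat r ?U)" by (rule mat_finite) simp
  have each: "card {N. N \<subseteq> M \<and> card N = k} = n choose k" if "M \<in> mat r ?U" for M
  proof -
    have "finite M \<and> card ?U = r * card M" using mat_card[OF r _ that] by simp
    then have "finite M" "card M = n" using r by simp_all
    then show ?thesis using n_subsets[of M k] by simp
  qed
  have fin2: "\<forall>M\<in>mat r ?U. finite {N. N \<subseteq> M \<and> card N = k}"
  proof
    fix M assume "M \<in> mat r ?U"
    then have "finite M" using mat_card[OF r finite_atLeastLessThan] by blast
    then show "finite {N. N \<subseteq> M \<and> card N = k}" by simp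
  qed
  have "card (Sigma (mat r ?U) (\<lambda>M. {N. N \<subseteq> M \<and> card N = k})) = (\<Sum>M\<in>mat r ?U. card {N. N \<subseteq> M \<and> card N = k})"
    using fin fin2 by (rule card_SigmaI)
  also have "\<dots> = (\<Sum>M\<in>mat r ?U. n choose k)" using each by (rule sum.cong[OF refl])
  also have "\<dots> = Mc r n * (n choose k)" by (simp add: Mc_def)
  finally show ?thesis unfolding eq .
qed

lemma sum_over_subsets:
  assumes r: "r > 0" and fS: "\<And>S. S \<subseteq> {0..<r*n} \<Longrightarrow> card S = r * k \<Longrightarrow> f S = c"
  shows "(\<Sum>S\<in>{S. S \<subseteq> {0..<r*n} \<and> card S = r * k}. f S) = (r*n choose (r*k)) * c"
proof -
  have "(\<Sum>S\<in>{S. S \<subseteq> {0..<r*n} \<and> card S = r * k}. f S) = (\<Sum>S\<in>{S. S \<subseteq> {0..<r*n} \<and> card S = r * k}. c)"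
    using fS by (intro sum.cong) auto
  also have "\<dots> = card {S. S \<subseteq> {0..<r*n} \<and> card S = r * k} * c" by simp
  also have "card {S. S \<subseteq> {0..<r*n} \<and> card S = r * k} = r*n choose (r*k)"
    using n_subsets[of "{0..<r*n}" "r*k"] by simp
  finally show ?thesis .
qed

lemma compl_card:
  assumes "S \<subseteq> {0..<r*n}" "card S = r * k"
  shows "card (mat r ({0..<r*n} - S)) = Mc r (n - k)"
proof -
  have "card ({0..<r*n} - S) = r*n - r*k" using assms by (simp add: card_Diff_subset finite_subset)
  also have "\<dots> = r * (n - k)" by (simp add: diff_mult_distrib2)
  finally show ?thesis unfolding Mc_def by (intro mat_card_inv) simp_all
qed

lemma ident1:
  assumes r: "r > 0"
  shows "Mc r n * (n choose k) = (r*n choose (r*k)) * (Mc r k * Mc r (n - k))"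
proof -
  have "Mc r n * (n choose k) = card {(M, N). M \<in> mat r {0..<r*n} \<and> N \<subseteq> M \<and> card N = k \<and> True}"
    using pairs_true[OF r] by simp
  also have "\<dots> = (\<Sum>S\<in>{S. S \<subseteq> {0..<r*n} \<and> card S = r * k}. card {N \<in> mat r S. True} * card (mat r ({0..<r*n} - S)))"
    by (rule pairs_decomp[OF r]) simp
  also have "\<dots> = (r*n choose (r*k)) * (Mc r k * Mc r (n - k))"
  proof (rule sum_over_subsets[OF r])
    fix S assume S: "S \<subseteq> {0..<r*n}" "card S = r * k"
    have "finite S" using S(1) finite_subset by blast
    then have "card (mat r S) = Mc r k" unfolding Mc_def using S(2) by (rule mat_card_inv)
    then show "card {N \<in> mat r S. True} * card (mat r ({0..<r*n} - S)) = Mc r k * Mc r (n - k)"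
      using compl_card[OF S] by simp
  qed
  finally show ?thesis .
qed

lemma ident2:
  assumes r: "r > 0"
  shows "card {(M, N). M \<in> mat r {0..<r*n} \<and> N \<subseteq> M \<and> card N = k \<and> is_clique P N}
     = (r*n choose (r*k)) * (a_clique r P k * Mc r (n - k))"
proof -
  have "card {(M, N). M \<in> mat r {0..<r*n} \<and> N \<subseteq> M \<and> card N = k \<and> is_clique P N}
     = (\<Sum>S\<in>{S. S \<subseteq> {0..<r*n} \<and> card S = r * k}. card {N \<in> mat r S. is_clique P N} * card (mat r ({0..<r*n} - S)))"
    by (rule pairs_decomp[OF r]) simp
  also have "\<dots> = (r*n choose (r*k)) * (a_clique r P k * Mc r (n - k))"
  proof (rule sum_over_subsets[OF r])
    fix S assume S: "S \<subseteq> {0..<r*n}" "card S = r * k"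
    have "finite S" using S(1) finite_subset by blast
    then have "card {N \<in> mat r S. is_clique P N} = a_clique r P k" using S(2) by (rule clique_count[OF r])
    then show "card {N \<in> mat r S. is_clique P N} * card (mat r ({0..<r*n} - S)) = a_clique r P k * Mc r (n - k)"
      using compl_card[OF S] by simp
  qed
  finally show ?thesis .
qed

lemma Mc_ge1_aux:
  assumes r: "r > 0" shows "Mc r 1 \<ge> 1"
proof -
  have "{{0..<r}} \<in> mat r {0..<r}" unfolding mat_def by simp
  moreover have "finite (mat r {0..<r})" by (rule mat_finite) simp
  ultimately have "card (mat r {0..<r}) \<noteq> 0" by (auto simp: card_eq_0_iff)
  then show ?thesis unfolding Mc_def by simp
qed

lemma Mc_lower:
  assumes r: "r > 0" shows "fact n ^ (r - 1) \<le> Mc r n"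
proof (induction n)
  case 0
  have "{} \<in> mat r {}" unfolding mat_def by simp
  moreover have "finite (mat r {})" by (rule mat_finite) simp
  ultimately have "card (mat r {}) \<noteq> 0" by (auto simp: card_eq_0_iff)
  then show ?case unfolding Mc_def by simp
next
  case (Suc n)
  have id: "Mc r (Suc n) * (Suc n choose 1) = (r * Suc n choose (r * 1)) * (Mc r 1 * Mc r (Suc n - 1))"
    by (rule ident1[OF r])
  have q: "real (r * Suc n) / real r = real (Suc n)" using r by (simp add: field_simps)
  have "real (Suc n) ^ r = (real (r * Suc n) / real r) ^ r" by (simp only: q)
  also have "\<dots> \<le> real (r * Suc n choose r)" by (rule binomial_ge_n_over_k_pow_k) simp
  finally have b: "Suc n ^ r \<le> (r * Suc n choose r)" by (simp only: of_nat_le_iff of_nat_power[symmetric])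
  have "fact (Suc n) ^ (r - 1) * Suc n = Suc n ^ r * fact n ^ (r - 1)"
  proof -
    have p: "Suc n ^ r = Suc n * Suc n ^ (r - 1)" using r by (cases r) simp_all
    have f: "(fact (Suc n)::nat) = Suc n * fact n" by simp
    show ?thesis unfolding f power_mult_distrib p by (simp only: ac_simps)
  qed
  also have "\<dots> \<le> (r * Suc n choose r) * (Mc r 1 * Mc r n)"
  proof -
    have "fact n ^ (r-1) \<le> Mc r 1 * Mc r n" using mult_le_mono[OF Mc_ge1_aux[OF r] Suc.IH] by simp
    then show ?thesis using b by (intro mult_mono) simp_all
  qed
  also have "\<dots> = Mc r (Suc n) * Suc n" using id by simp
  finally show ?case by (simp only: mult_le_cancel2)
qed



lemma Mc_pos: "r > 0 \<Longrightarrow> Mc r n > 0"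
proof -
  assume r: "r > 0"
  have "(1::nat) \<le> fact n ^ (r - 1)" by (simp add: one_le_power)
  then show ?thesis using Mc_lower[OF r, of n] by linarith
qed

lemma bad_subset:
  assumes r: "r > 0"
  shows "{M \<in> ord_matchings r n. k \<le> z_clique P M}
    \<subseteq> fst ` {(M, N). M \<in> mat r {0..<r*n} \<and> N \<subseteq> M \<and> card N = k \<and> is_clique P N}"
proof
  fix M assume "M \<in> {M \<in> ord_matchings r n. k \<le> z_clique P M}"
  then have M: "M \<in> mat r {0..<r*n}" and kz: "k \<le> z_clique P M" using ord_eq[OF r] by auto
  have fM: "finite M" using mat_card[OF r finite_atLeastLessThan M] by blast
  let ?Z = "card ` {N. N \<subseteq> M \<and> is_clique P N}"
  have "{N. N \<subseteq> M \<and> is_clique P N} \<subseteq> Pow M" by blast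
  moreover have "finite (Pow M)" using fM by simp
  ultimately have "finite {N. N \<subseteq> M \<and> is_clique P N}" by (rule finite_subset)
  then have fZ: "finite ?Z" by simp
  have "is_clique P {}" unfolding is_clique_def by simp
  then have "{} \<in> {N. N \<subseteq> M \<and> is_clique P N}" by simp
  then have nZ: "?Z \<noteq> {}" by blast
  have "Max ?Z \<in> ?Z" using fZ nZ by (rule Max_in)
  then obtain N where N: "N \<subseteq> M" "is_clique P N" "card N = z_clique P M"
    unfolding z_clique_def by auto
  obtain T where T: "T \<subseteq> N" "card T = k" using obtain_subset_with_card_n[of k N] kz N(3) by metis
  have "is_clique P T" using N(2) T(1) unfolding is_clique_def by blast
  then have "(M, T) \<in> {(M, N). M \<in> mat r {0..<r*n} \<and> N \<subseteq> M \<and> card N = k \<and> is_clique P N}"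
    using M T N(1) by auto
  then show "M \<in> fst ` {(M, N). M \<in> mat r {0..<r*n} \<and> N \<subseteq> M \<and> card N = k \<and> is_clique P N}"
    by (rule rev_image_eqI) simp
qed

lemma bad_bound:
  assumes r: "r > 0"
  shows "real (card {M \<in> ord_matchings r n. k \<le> z_clique P M}) / real (card (ord_matchings r n))
    \<le> real (a_clique r P k) * real (n choose k) / real (Mc r k)"
proof -
  define Pairs where "Pairs = {(M, N). M \<in> mat r {0..<r*n} \<and> N \<subseteq> M \<and> card N = k \<and> is_clique P N}"
  have "Pairs \<subseteq> mat r {0..<r*n} \<times> Pow (Pow {0..<r*n})"
  proof
    fix p assume "p \<in> Pairs"
    then obtain M N where p: "p = (M, N)" "M \<in> mat r {0..<r*n}" "N \<subseteq> M" unfolding Pairs_def by blast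
    have "M \<subseteq> Pow {0..<r*n}" using mat_Pow[OF p(2)] .
    then show "p \<in> mat r {0..<r*n} \<times> Pow (Pow {0..<r*n})" using p by auto
  qed
  moreover have "finite (mat r {0..<r*n} \<times> Pow (Pow {0..<r*n}))" using mat_finite by simp
  ultimately have fP: "finite Pairs" by (rule finite_subset)
  have "card {M \<in> ord_matchings r n. k \<le> z_clique P M} \<le> card (fst ` Pairs)"
    using bad_subset[OF r, of n k P] fP unfolding Pairs_def[symmetric] by (intro card_mono) simp_all
  also have "\<dots> \<le> card Pairs" using fP by (rule card_image_le)
  also have "\<dots> = (r*n choose (r*k)) * (a_clique r P k * Mc r (n - k))"
    unfolding Pairs_def by (rule ident2[OF r])
  finally have b: "card {M \<in> ord_matchings r n. k \<le> z_clique P M} \<le> (r*n choose (r*k)) * (a_clique r P k * Mc r (n - k))" .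
  have i1: "Mc r n * (n choose k) = (r*n choose (r*k)) * (Mc r k * Mc r (n - k))" by (rule ident1[OF r])
  have co: "card (ord_matchings r n) = Mc r n" unfolding Mc_def ord_eq[OF r] ..
  have "card {M \<in> ord_matchings r n. k \<le> z_clique P M} * Mc r k \<le> (r*n choose (r*k)) * (a_clique r P k * Mc r (n - k)) * Mc r k"
    using b by (rule mult_right_mono) simp
  also have "\<dots> = a_clique r P k * (Mc r n * (n choose k))" unfolding i1 by (simp only: ac_simps)
  finally have "real (card {M \<in> ord_matchings r n. k \<le> z_clique P M}) * real (Mc r k) \<le> real (a_clique r P k) * real (n choose k) * real (Mc r n)"
    by (simp only: of_nat_mult[symmetric] of_nat_le_iff ac_simps)
  moreover have "real (Mc r k) > 0" "real (Mc r n) > 0" using Mc_pos[OF r] by simp_all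
  ultimately show ?thesis unfolding co by (simp add: field_simps)
qed

lemma pow_le_exp_fact: "real k ^ k \<le> exp (real k) * fact k"
proof -
  have s: "summable (\<lambda>n. real k ^ n /\<^sub>R fact n)" using exp_converges sums_summable by blast
  have "sum (\<lambda>n. real k ^ n /\<^sub>R fact n) {k} \<le> suminf (\<lambda>n. real k ^ n /\<^sub>R fact n)"
    by (rule sum_le_suminf[OF s]) simp_all
  also have "\<dots> = exp (real k)" using exp_converges sums_unique by metis
  finally have "real k ^ k / fact k \<le> exp (real k)" by (simp add: divide_inverse_commute)
  then show ?thesis by (simp add: divide_le_eq mult.commute)
qed



lemma real_est:
  fixes C x y D K a C2 :: real and r k n :: nat
  assumes r: "r > 0" and k: "k \<ge> 1" and C: "C > 0" and y: "y = real r - x" "y > 0"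
    and D: "D = C * exp (real r)"
    and a: "a \<le> C ^ k * real k powr (real k * x)" "a \<ge> 0"
    and kK: "K \<le> real k" and Kpos: "K > 0"
    and KD: "2 * D * real n \<le> K powr y"
  shows "a * real (n choose k) / real (Mc r k) \<le> (1/2) ^ k"
proof -
  define f where "f = (fact k :: real)"
  have fpos: "f > 0" unfolding f_def by simp
  have kpos: "real k > 0" using k by simp
  have m: "f ^ (r - 1) \<le> real (Mc r k)"
  proof -
    have "fact k ^ (r - 1) \<le> Mc r k" by (rule Mc_lower[OF r])
    then have "real (fact k ^ (r - 1)) \<le> real (Mc r k)" by (simp only: of_nat_le_iff)
    then show ?thesis unfolding f_def by simp
  qed
  have mpos: "f ^ (r - 1) > 0" using fpos by simp
  have cf: "real (n choose k) * f \<le> real n ^ k"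
  proof -
    have "(n choose k) * fact k \<le> n ^ k" by (rule binomial_fact_pow)
    then have "real ((n choose k) * fact k) \<le> real (n ^ k)" by (simp only: of_nat_le_iff)
    then show ?thesis unfolding f_def by simp
  qed
  have c0: "real (n choose k) \<ge> 0" by simp
  have "a * real (n choose k) / real (Mc r k) \<le> a * real (n choose k) / f ^ (r - 1)"
    using a(2) c0 m mpos by (intro divide_left_mono mult_nonneg_nonneg) simp_all
  also have "\<dots> = a * (real (n choose k) * f) / f ^ r"
  proof -
    have "f ^ r = f * f ^ (r - 1)" using r by (cases r) simp_all
    then show ?thesis using fpos by (simp add: field_simps)
  qed
  also have "\<dots> \<le> (C ^ k * real k powr (real k * x)) * real n ^ k / f ^ r"
    using a cf fpos c0 by (intro divide_right_mono mult_mono) simp_all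
  finally have E1: "a * real (n choose k) / real (Mc r k) \<le> (C ^ k * real k powr (real k * x)) * real n ^ k / f ^ r" .
  have F1: "2 * D * real n \<le> real k powr y"
    using KD powr_mono2[of y K "real k"] y(2) Kpos kK by simp
  have F2: "real k powr (real k * real r) = real k powr (real k * x) * (real k powr y) ^ k"
  proof -
    have e: "real k * real r = real k * x + real k * y" unfolding y(1) by (simp add: algebra_simps)
    have "(real k powr y) ^ k = real k powr (real k * y)" using kpos by (simp add: powr_power)
    then show ?thesis unfolding e powr_add by simp
  qed
  have F3: "real k powr (real k * real r) = (real k ^ k) ^ r"
  proof -
    have "real k powr (real k * real r) = real k powr (real (k * r))" by simp
    also have "\<dots> = real k ^ (k * r)" using kpos by (rule powr_realpow)
    finally show ?thesis by (simp add: power_mult)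
  qed
  have F4: "(real k ^ k) ^ r \<le> (exp (real k) * f) ^ r"
    unfolding f_def by (rule power_mono[OF pow_le_exp_fact]) simp
  have F5: "exp (real k) ^ r = exp (real r) ^ k"
    by (metis exp_of_nat_mult mult.commute)
  have D0: "D > 0" using D C by simp
  have "(2 * D * real n) ^ k \<le> (real k powr y) ^ k"
    using F1 D0 by (intro power_mono) simp_all
  then have "(2 * D * real n) ^ k * real k powr (real k * x) \<le> (real k powr y) ^ k * real k powr (real k * x)"
    by (rule mult_right_mono) simp
  also have "\<dots> = (real k ^ k) ^ r" using F2 F3 by (simp add: mult.commute)
  also have "\<dots> \<le> exp (real r) ^ k * f ^ r" using F4 F5 by (simp add: power_mult_distrib)
  finally have G: "(2 * D * real n) ^ k * real k powr (real k * x) \<le> exp (real r) ^ k * f ^ r" .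
  have H: "(2 * D * real n) ^ k = 2 ^ k * exp (real r) ^ k * (C ^ k * real n ^ k)"
    unfolding D by (simp add: power_mult_distrib)
  have ep: "2 ^ k * exp (real r) ^ k > (0::real)" by simp
  have "(C ^ k * real k powr (real k * x)) * real n ^ k * (2 ^ k * exp (real r) ^ k) \<le> exp (real r) ^ k * f ^ r"
    using G unfolding H by (simp only: ac_simps)
  then have "(C ^ k * real k powr (real k * x)) * real n ^ k \<le> f ^ r / 2 ^ k"
    by (simp add: field_simps)
  then have E2: "(C ^ k * real k powr (real k * x)) * real n ^ k / f ^ r \<le> (1/2) ^ k"
    using fpos by (simp add: field_simps)
  show ?thesis using E1 E2 by linarith
qed



theorem lemma3p2:
  fixes r :: nat and P :: "nat set set set" and C x :: real
  assumes "r \<ge> 2"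
    and "P \<subseteq> r_patterns r"
    and "C > 0" and "0 \<le> x" and "x < real r"
    and "\<forall>k\<ge>2. real (a_clique r P k) \<le> C ^ k * real k powr (real k * x)"
  shows "\<exists>C''>0. (\<lambda>n. prob_RM r n (\<lambda>M. real (z_clique P M) \<le> C'' * real n powr (1 / (real r - x))))
            \<longlonglongrightarrow> 1"
proof -
  have r: "r > 0" using assms(1) by simp
  define y where "y = real r - x"
  have y: "y > 0" using assms(5) unfolding y_def by simp
  define D where "D = C * exp (real r)"
  have D0: "D > 0" using assms(3) unfolding D_def by simp
  define C2 where "C2 = max 2 ((2 * D) powr (1 / y))"
  have C2: "C2 \<ge> 2" unfolding C2_def by simp
  have C2y: "2 * D \<le> C2 powr y"
  proof -
    have "2 * D = ((2 * D) powr (1/y)) powr y" using D0 y by (simp add: powr_powr)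
    also have "\<dots> \<le> C2 powr y" unfolding C2_def by (intro powr_mono2) (use y in auto)
    finally show ?thesis .
  qed
  define g where "g n = prob_RM r n (\<lambda>M. real (z_clique P M) \<le> C2 * real n powr (1 / (real r - x)))" for n
  have fin: "finite (ord_matchings r n)" for n unfolding ord_eq[OF r] by (rule mat_finite) simp
  have low: "1 - (1/C2) * real n powr (-(1/y)) \<le> g n" if n: "n \<ge> 1" for n
  proof -
    define K where "K = C2 * real n powr (1/y)"
    have npow: "real n powr (1/y) \<ge> 1" using n y by (intro ge_one_powr_ge_zero) simp_all
    have "C2 * 1 \<le> C2 * real n powr (1/y)" using C2 npow by (intro mult_left_mono) simp_all
    then have K2: "K \<ge> 2" unfolding K_def using C2 by linarith
    define k where "k = nat \<lfloor>K\<rfloor> + 1"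
    have rk: "real k = real_of_int \<lfloor>K\<rfloor> + 1" unfolding k_def using K2 by simp
    have kK: "K < real k" unfolding rk by linarith
    have k2: "k \<ge> 2" using kK K2 by simp
    have "K powr y = C2 powr y * (real n powr (1/y)) powr y" unfolding K_def using C2 by (simp add: powr_mult)
    also have "(real n powr (1/y)) powr y = real n" using y n by (simp add: powr_powr)
    finally have "K powr y = C2 powr y * real n" .
    moreover have "2 * D * real n \<le> C2 powr y * real n" using C2y by (intro mult_right_mono) simp_all
    ultimately have KD: "2 * D * real n \<le> K powr y" by simp
    have a: "real (a_clique r P k) \<le> C ^ k * real k powr (real k * x)" using assms(6) k2 by simp
    have A: "real (a_clique r P k) * real (n choose k) / real (Mc r k) \<le> (1/2) ^ k"
      by (rule real_est[OF r _ assms(3) y_def y D_def a _ less_imp_le[OF kK] _ KD]) (use k2 K2 in simp_all)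
    have "real k < real (2 ^ k)" using less_exp[of k] by (simp only: of_nat_less_iff)
    then have "real k < 2 ^ k" by simp
    then have half: "(1/2) ^ k \<le> 1 / real k" using k2 by (simp add: field_simps power_one_over)
    have "1 / real k \<le> 1 / K" using kK K2 by (intro divide_left_mono) simp_all
    also have "1 / K = (1/C2) * real n powr (-(1/y))" unfolding K_def using n by (simp add: powr_minus field_simps)
    finally have B: "real (a_clique r P k) * real (n choose k) / real (Mc r k) \<le> (1/C2) * real n powr (-(1/y))"
      using A half by linarith
    define Om where "Om = ord_matchings r n"
    define Gd where "Gd = {M \<in> Om. real (z_clique P M) \<le> K}"
    define Ng where "Ng = {M \<in> Om. \<not> real (z_clique P M) \<le> K}"
    define Bd where "Bd = {M \<in> Om. k \<le> z_clique P M}"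
    have gn: "g n = real (card Gd) / real (card Om)"
      unfolding g_def prob_RM_def Gd_def Om_def K_def y_def ..
    have fO: "finite Om" unfolding Om_def by (rule fin)
    have Opos: "card Om > 0" unfolding Om_def ord_eq[OF r] using Mc_pos[OF r, of n] by (simp add: Mc_def)
    have "Om = Gd \<union> Ng" unfolding Gd_def Ng_def by auto
    moreover have "Gd \<inter> Ng = {}" unfolding Gd_def Ng_def by auto
    moreover have "finite Gd" "finite Ng" using fO unfolding Gd_def Ng_def by simp_all
    ultimately have cO: "card Om = card Gd + card Ng" using card_Un_disjoint by metis
    have "Ng \<subseteq> Bd"
    proof
      fix M assume "M \<in> Ng"
      then have M: "M \<in> Om" "K < real (z_clique P M)" unfolding Ng_def by auto
      then have "\<lfloor>K\<rfloor> < int (z_clique P M)" by (simp add: floor_less_iff)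
      moreover have "0 \<le> \<lfloor>K\<rfloor>" using K2 by simp
      ultimately have "nat \<lfloor>K\<rfloor> < z_clique P M" by (simp add: nat_less_iff)
      then have "k \<le> z_clique P M" unfolding k_def by simp
      then show "M \<in> Bd" using M unfolding Bd_def by simp
    qed
    then have "card Ng \<le> card Bd" using fO unfolding Bd_def by (intro card_mono) simp_all
    have bb: "real (card Bd) / real (card Om) \<le> real (a_clique r P k) * real (n choose k) / real (Mc r k)"
      unfolding Bd_def Om_def by (rule bad_bound[OF r])
    have "real (card Ng) / real (card Om) \<le> real (card Bd) / real (card Om)"
      using \<open>card Ng \<le> card Bd\<close> Opos by (intro divide_right_mono) simp_all
    moreover have "g n = 1 - real (card Ng) / real (card Om)"
    proof -
      have "real (card Om) = real (card Gd) + real (card Ng)" using cO by simp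
      moreover have "real (card Om) > 0" using Opos by simp
      ultimately show ?thesis unfolding gn by (simp add: field_simps)
    qed
    ultimately show ?thesis using bb B by linarith
  qed
  have up: "g n \<le> 1" for n
  proof -
    have "card {M \<in> ord_matchings r n. real (z_clique P M) \<le> C2 * real n powr (1 / (real r - x))} \<le> card (ord_matchings r n)"
      using fin by (intro card_mono) auto
    then show ?thesis unfolding g_def prob_RM_def by (auto simp add: divide_le_eq_1)
  qed
  have "(\<lambda>n. real n powr (-(1/y))) \<longlonglongrightarrow> 0"
    by (rule tendsto_neg_powr[OF _ filterlim_real_sequentially]) (use y in simp)
  then have "(\<lambda>n. 1 - (1/C2) * real n powr (-(1/y))) \<longlonglongrightarrow> 1 - (1/C2) * 0"
    by (intro tendsto_intros)
  then have lim: "(\<lambda>n. 1 - (1/C2) * real n powr (-(1/y))) \<longlonglongrightarrow> 1" by simp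
  have ev1: "eventually (\<lambda>n. 1 - (1/C2) * real n powr (-(1/y)) \<le> g n) sequentially"
    unfolding eventually_sequentially using low by blast
  have ev2: "eventually (\<lambda>n. g n \<le> 1) sequentially" using up by simp
  have "g \<longlonglongrightarrow> 1" by (rule tendsto_sandwich[OF ev1 ev2 lim tendsto_const])
  moreover have "C2 > 0" using C2 by simp
  ultimately show ?thesis unfolding g_def by blast
qed


end
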